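(* Let $\mathbb{H}=\{z\in\mathbb{C}:\operatorname{Im}z>0\}$. For all $z_1,z_2\in\mathbb{H}$, \[ b_{\mathbb{H},2}(z_1,z_2)=\frac{\sqrt2\,|z_1-z_2|}{\sqrt{|z_1-z_2|^2+|\operatorname{Im}(z_1+z_2)|^2}}=\frac{|z_1-z_2|}{\sqrt{|z_1-m|^2+|z_2-m|^2}}, \] where $m=\operatorname{Re}(z_1+z_2)/2$ (viewed as a point of the real axis).
   Context: For a domain $G\subsetneq\mathbb{C}$ and $z_1,z_2\in G$, $b_{G,2}(z_1,z_2)=\sup_{z\in\partial G}\frac{|z_1-z_2|}{\sqrt{|z_1-z|^2+|z-z_2|^2}}$. *)

theory Defs
  imports "HOL-Analysis.Analysis"
begin

definition b_G2 :: "complex set \<Rightarrow> complex \<Rightarrow> complex \<Rightarrow> real" where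
  "b_G2 G z1 z2 = (SUP z \<in> frontier G. cmod (z1 - z2) / sqrt ((cmod (z1 - z))\<^sup>2 + (cmod (z - z2))\<^sup>2))"

definition upper_half_plane :: "complex set" where
  "upper_half_plane = {z. Im z > 0}"

end

theory Submission
  imports Defs
begin

lemma frontier_uhp: "frontier upper_half_plane = {z. Im z = 0}"
proof -
  have "upper_half_plane = {x. \<i> \<bullet> x > 0}"
    by (auto simp: upper_half_plane_def inner_complex_def)
  moreover have "{x. \<i> \<bullet> x = (0::real)} = {z. Im z = 0}"
    by (auto simp: inner_complex_def)
  ultimately show ?thesis using frontier_halfspace_gt[of "\<i>" 0] by simp
qed

theorem theorem3p12:
  fixes z1 z2 :: complex
  assumes "z1 \<in> upper_half_plane" and "z2 \<in> upper_half_plane"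
  defines "m \<equiv> complex_of_real (Re (z1 + z2) / 2)"
  shows "b_G2 upper_half_plane z1 z2
           = sqrt 2 * cmod (z1 - z2) / sqrt ((cmod (z1 - z2))\<^sup>2 + \<bar>Im (z1 + z2)\<bar>\<^sup>2)
         \<and> b_G2 upper_half_plane z1 z2
           = cmod (z1 - z2) / sqrt ((cmod (z1 - m))\<^sup>2 + (cmod (z2 - m))\<^sup>2)"
proof -
  have y1: "Im z1 > 0" and y2: "Im z2 > 0" using assms by (auto simp: upper_half_plane_def)
  define f where "f z = (cmod (z1 - z))\<^sup>2 + (cmod (z - z2))\<^sup>2" for z
  have fe: "f z = (Re z1 - Re z)^2 + (Im z1 - Im z)^2 + (Re z - Re z2)^2 + (Im z - Im z2)^2" for z
    unfolding f_def cmod_power2 by simp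
  have fm: "f m = (Re z1 - Re z2)^2 / 2 + (Im z1)^2 + (Im z2)^2"
    unfolding fe m_def by (simp add: power2_eq_square field_simps)
  have fmpos: "f m > 0" using fm y1 by (smt (verit) zero_le_power2 zero_less_power2 divide_nonneg_pos)
  have mle: "f m \<le> f z" if "Im z = 0" for z
  proof -
    have "f z - f m = 2 * (Re z - (Re z1 + Re z2)/2)^2"
      unfolding fe fm using that by (simp add: m_def power2_eq_square field_simps)
    thus ?thesis by (smt (verit) zero_le_power2)
  qed
  have Im_m: "Im m = 0" by (simp add: m_def)
  have b: "b_G2 upper_half_plane z1 z2 = cmod (z1 - z2) / sqrt (f m)"
    unfolding b_G2_def frontier_uhp
  proof (rule cSup_eq_maximum)
    show "cmod (z1 - z2) / sqrt (f m) \<in> (\<lambda>z. cmod (z1 - z2) / sqrt ((cmod (z1 - z))\<^sup>2 + (cmod (z - z2))\<^sup>2)) ` {z. Im z = 0}"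
      using Im_m by (auto simp: f_def)
  next
    fix x assume "x \<in> (\<lambda>z. cmod (z1 - z2) / sqrt ((cmod (z1 - z))\<^sup>2 + (cmod (z - z2))\<^sup>2)) ` {z. Im z = 0}"
    then obtain z where z: "Im z = 0" and x: "x = cmod (z1 - z2) / sqrt (f z)" by (auto simp: f_def)
    have "sqrt (f m) \<le> sqrt (f z)" using mle[OF z] by simp
    moreover have "sqrt (f m) > 0" using fmpos by simp
    ultimately show "x \<le> cmod (z1 - z2) / sqrt (f m)" unfolding x
      by (simp add: divide_left_mono)
  qed
  have fm2: "f m = (cmod (z1 - m))\<^sup>2 + (cmod (z2 - m))\<^sup>2"
    unfolding f_def by (simp add: norm_minus_commute)
  have e2: "(cmod (z1 - z2))\<^sup>2 + \<bar>Im (z1 + z2)\<bar>\<^sup>2 = 2 * f m"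
    unfolding fm cmod_power2 by (simp add: power2_eq_square field_simps)
  have "sqrt 2 * cmod (z1 - z2) / sqrt ((cmod (z1 - z2))\<^sup>2 + \<bar>Im (z1 + z2)\<bar>\<^sup>2)
        = cmod (z1 - z2) / sqrt (f m)"
    unfolding e2 real_sqrt_mult using fmpos by simp
  thus ?thesis using b fm2 by simp
qed

end
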